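(* Let $T$, $S$, $A$ be closed subspaces in $X^2$ with $D(T)=D(S)=:D\subset D(A)$ and $T=S+A$. Then $T(0)^\perp\subset S(0)^\perp$ and $T(0)^\perp\subset A(0)^\perp$; let $P:S(0)^\perp\to T(0)^\perp$ and $Q:A(0)^\perp\to T(0)^\perp$ be the orthogonal projections. Then $$T_sx=PS_sx+QA_sx\quad\text{for all }x\in D.$$ Furthermore, if $S$ and $A$ are Hermitian subspaces in $X^2$, then $PS_s$ and $QA_s$ (restricted to $D$) are Hermitian operators in $D$, i.e. $\langle PS_sx,y\rangle=\langle x,PS_sy\rangle$ and $\langle QA_sx,y\rangle=\langle x,QA_sy\rangle$ for all $x,y\in D$.
   Context: $X$ is a complex Hilbert space and $X^2=X\times X$ carries the inner product $\langle (x,f),(y,g)\rangle=\langle x,y\rangle+\langle f,g\rangle$. A subspace $T$ in $X^2$ means a linear subspace of $X^2$ (a linear relation); a linear operator in $X$ is identified with its graph. Notation: $D(T)=\{x:(x,f)\in T \text{ for some } f\}$, $R(T)=\{f:(x,f)\in T \text{ for some } x\}$, $T(x)=\{f:(x,f)\in T\}$. The adjoint is $T^*=\{(y,g)\in X^2:\langle g,x\rangle=\langle y,f\rangle \text{ for all }(x,f)\in T\}$; $T$ is Hermitian if $T\subset T^*$ and self-adjoint if $T=T^*$. For subspaces $S,A$ in $X^2$, $S+A=\{(x,f+g):(x,f)\in S,(x,g)\in A\}$. For a closed subspace $T$, set $T_\infty=\{(0,g)\in X^2:(0,g)\in T\}$ and $T_s=T\ominus T_\infty$ (orthogonal complement of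 $T_\infty$ in $T$), so $T=T_s\oplus T_\infty$; $T_s$ is the graph of a linear operator (the operator part of $T$) with $D(T_s)=D(T)$ and $R(T_s)\subset T(0)^\perp$, and it is regarded as an operator in $T(0)^\perp$. *)

theory Defs
  imports "HOL-Analysis.Analysis"
begin

class complex_vector = real_vector +
  fixes scaleC :: "complex \<Rightarrow> 'a \<Rightarrow> 'a" (infixr "*\<^sub>C" 75)
  assumes scaleC_add_right: "a *\<^sub>C (x + y) = a *\<^sub>C x + a *\<^sub>C y"
    and scaleC_add_left: "(a + b) *\<^sub>C x = a *\<^sub>C x + b *\<^sub>C x"
    and scaleC_scaleC: "a *\<^sub>C (b *\<^sub>C x) = (a * b) *\<^sub>C x"
    and scaleC_one: "1 *\<^sub>C x = x"
    and scaleR_scaleC: "scaleR r x = complex_of_real r *\<^sub>C x"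

text \<open>Complex inner product, linear in the first argument; its real part is the
  underlying real inner product (which induces the norm and the topology).\<close>
class complex_inner = real_inner + complex_vector +
  fixes cinner :: "'a \<Rightarrow> 'a \<Rightarrow> complex"
  assumes cinner_commute: "cinner x y = cnj (cinner y x)"
    and cinner_add_left: "cinner (x + y) z = cinner x z + cinner y z"
    and cinner_scaleC_left: "cinner (a *\<^sub>C x) y = a * cinner x y"
    and Re_cinner: "Re (cinner x y) = inner x y"

class chilbert_space = complex_inner + complete_space

definition linear_relation :: "('a::complex_vector \<times> 'a) set \<Rightarrow> bool" where
  "linear_relation T \<longleftrightarrow> (0, 0) \<in> T
     \<and> (\<forall>p\<in>T. \<forall>q\<in>T. (fst p + fst q, snd p + snd q) \<in> T)
     \<and> (\<forall>c. \<forall>p\<in>T. (c *\<^sub>C fst p, c *\<^sub>C snd p) \<in> T)"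

definition pinner :: "'a::complex_inner \<times> 'a \<Rightarrow> 'a \<times> 'a \<Rightarrow> complex" where
  "pinner p q = cinner (fst p) (fst q) + cinner (snd p) (snd q)"

definition orth :: "'a::complex_inner set \<Rightarrow> 'a set" where
  "orth M = {y. \<forall>x\<in>M. cinner x y = 0}"

definition adjoint_rel :: "('a::complex_inner \<times> 'a) set \<Rightarrow> ('a \<times> 'a) set" where
  "adjoint_rel T = {(y, g). \<forall>(x, f)\<in>T. cinner g x = cinner y f}"

definition hermitian_rel :: "('a::complex_inner \<times> 'a) set \<Rightarrow> bool" where
  "hermitian_rel T \<longleftrightarrow> T \<subseteq> adjoint_rel T"

definition rel_sum :: "('a::complex_vector \<times> 'a) set \<Rightarrow> ('a \<times> 'a) set \<Rightarrow> ('a \<times> 'a) set" where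
  "rel_sum S A = {(x, f + g) | x f g. (x, f) \<in> S \<and> (x, g) \<in> A}"

definition T_inf :: "('a::complex_vector \<times> 'a) set \<Rightarrow> ('a \<times> 'a) set" where
  "T_inf T = {p \<in> T. fst p = 0}"

definition T_s :: "('a::complex_inner \<times> 'a) set \<Rightarrow> ('a \<times> 'a) set" where
  "T_s T = {p \<in> T. \<forall>q\<in>T_inf T. pinner p q = 0}"

definition op_part :: "('a::complex_inner \<times> 'a) set \<Rightarrow> 'a \<Rightarrow> 'a" where
  "op_part T x = (THE f. (x, f) \<in> T_s T)"

definition orth_proj :: "'a::complex_inner set \<Rightarrow> 'a \<Rightarrow> 'a" where
  "orth_proj M v = (THE m. m \<in> M \<and> v - m \<in> orth M)"

end

theory Submission
  imports Defs
begin

lemma cinner_add_right: "cinner x (y + z) = cinner x y + cinner x z"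
  by (metis cinner_add_left cinner_commute complex_cnj_add)

lemma cinner_zero_left[simp]: "cinner 0 y = 0"
  using cinner_add_left[of 0 0 y] by simp

lemma cinner_zero_right[simp]: "cinner y 0 = 0"
  by (metis cinner_commute cinner_zero_left complex_cnj_zero)

lemma cinner_minus_left: "cinner (- x) y = - cinner x y"
  using cinner_add_left[of x "-x" y] by (simp add: add_eq_0_iff2)

lemma cinner_diff_left: "cinner (x - y) z = cinner x z - cinner y z"
  using cinner_add_left[of x "-y" z] cinner_minus_left[of y z] by simp

lemma cinner_minus_right: "cinner y (- x) = - cinner y x"
  by (metis cinner_commute cinner_minus_left complex_cnj_minus)

lemma cinner_diff_right: "cinner x (y - z) = cinner x y - cinner x z"
  using cinner_add_right[of x y "-z"] cinner_minus_right[of x z] by simp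

lemma cinner_self_zero: "cinner x x = 0 \<Longrightarrow> x = 0"
  by (metis Re_cinner inner_eq_zero_iff zero_complex.sel(1))

lemma scaleC_minus1: "(-1) *\<^sub>C x = - x"
  using scaleR_scaleC[of "-1" x] by simp

definition csub :: "'a::complex_vector set \<Rightarrow> bool" where
  "csub M \<longleftrightarrow> 0 \<in> M \<and> (\<forall>a\<in>M. \<forall>b\<in>M. a + b \<in> M) \<and> (\<forall>c. \<forall>a\<in>M. c *\<^sub>C a \<in> M)"

lemma csub_add: "csub M \<Longrightarrow> a \<in> M \<Longrightarrow> b \<in> M \<Longrightarrow> a + b \<in> M"
  unfolding csub_def by blast
lemma csub_scaleC: "csub M \<Longrightarrow> a \<in> M \<Longrightarrow> c *\<^sub>C a \<in> M"
  unfolding csub_def by blast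
lemma csub_scaleR: "csub M \<Longrightarrow> a \<in> M \<Longrightarrow> c *\<^sub>R a \<in> M"
  unfolding csub_def by (simp add: scaleR_scaleC)
lemma csub_minus: "csub M \<Longrightarrow> a \<in> M \<Longrightarrow> - a \<in> M"
  by (metis csub_scaleC scaleC_minus1)
lemma csub_diff: "csub M \<Longrightarrow> a \<in> M \<Longrightarrow> b \<in> M \<Longrightarrow> a - b \<in> M"
  by (metis csub_add csub_minus diff_conv_add_uminus)

lemma para: "norm (p - q)^2 = 2*norm(v-p)^2 + 2*norm(v-q)^2 - 4*norm(v - (1/2) *\<^sub>R (p+q))^2"
  for p q v :: "'a::real_inner"
  unfolding power2_norm_eq_inner
  by (simp add: inner_diff_left inner_diff_right inner_add_left inner_add_right inner_commute algebra_simps)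

lemma proj_exists:
  fixes M :: "'a::chilbert_space set"
  assumes sub: "csub M" and cl: "closed M"
  shows "\<exists>a\<in>M. v - a \<in> orth M"
proof -
  have M0: "0 \<in> M" using sub unfolding csub_def by blast
  define d where "d = Inf ((\<lambda>m. norm (v - m)) ` M)"
  have bdd: "bdd_below ((\<lambda>m. norm (v - m)) ` M)"
    by (rule bdd_belowI[of _ 0]) auto
  have dle: "\<And>m. m \<in> M \<Longrightarrow> d \<le> norm (v - m)"
    unfolding d_def by (rule cInf_lower[OF _ bdd]) auto
  have d0: "0 \<le> d" unfolding d_def using M0 by (intro cInf_greatest) auto
  have "\<forall>n. \<exists>m. m \<in> M \<and> norm (v - m)^2 < d^2 + inverse (real (Suc n))"
  proof
    fix n
    define e where "e = sqrt (d^2 + inverse (real (Suc n)))"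
    have "d < e" unfolding e_def using d0
      by (metis inverse_positive_iff_positive less_add_same_cancel1 of_nat_0_less_iff real_sqrt_abs real_sqrt_less_iff zero_less_Suc abs_of_nonneg)
    hence "Inf ((\<lambda>m. norm (v - m)) ` M) < e" unfolding d_def .
    then obtain m where m: "m \<in> M" "norm (v - m) < e"
      using cInf_lessD[of "(\<lambda>m. norm (v - m)) ` M" e] M0 by auto
    have "norm (v - m)^2 < e^2" using m(2) by (simp add: power_strict_mono)
    also have "e^2 = d^2 + inverse (real (Suc n))" unfolding e_def
      by (simp add: add_nonneg_nonneg)
    finally show "\<exists>m. m \<in> M \<and> norm (v - m)^2 < d^2 + inverse (real (Suc n))" using m by blast
  qed
  then obtain f where f: "\<And>n. f n \<in> M" "\<And>n. norm (v - f n)^2 < d^2 + inverse (real (Suc n))"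
    by metis
  have pb: "norm (f a - f b)^2 \<le> 2*inverse (real (Suc a)) + 2*inverse (real (Suc b))" for a b
  proof -
    have "(1/2) *\<^sub>R (f a + f b) \<in> M" using f(1) sub by (simp add: csub_add csub_scaleR)
    hence "d \<le> norm (v - (1/2) *\<^sub>R (f a + f b))" by (rule dle)
    hence "d^2 \<le> norm (v - (1/2) *\<^sub>R (f a + f b))^2" using d0 by (simp add: power_mono)
    thus ?thesis using para[of "f a" "f b" v] f(2)[of a] f(2)[of b] by linarith
  qed
  have "Cauchy f"
  proof (rule metric_CauchyI)
    fix e :: real assume e: "0 < e"
    obtain N where N: "inverse (real (Suc N)) < e^2/4" using reals_Archimedean[of "e^2/4"] e by auto
    show "\<exists>M. \<forall>m\<ge>M. \<forall>n\<ge>M. dist (f m) (f n) < e"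
    proof (intro exI allI impI)
      fix a b assume ab: "N \<le> a" "N \<le> b"
      have "inverse (real (Suc a)) \<le> inverse (real (Suc N))" using ab by (simp add: le_imp_inverse_le)
      moreover have "inverse (real (Suc b)) \<le> inverse (real (Suc N))" using ab by (simp add: le_imp_inverse_le)
      ultimately have "dist (f a) (f b)^2 < e^2" using pb[of a b] N unfolding dist_norm by linarith
      thus "dist (f a) (f b) < e" using e by (meson abs_le_square_iff abs_of_pos less_le_not_le power2_less_imp_less zero_le_dist)
    qed
  qed
  then obtain m where lim: "f \<longlonglongrightarrow> m" using Cauchy_convergent convergent_def by blast
  have mM: "m \<in> M" using closed_sequentially[OF cl] f(1) lim by blast
  have "norm (v - m)^2 \<le> d^2"
  proof (rule LIMSEQ_le)
    show "(\<lambda>n. norm (v - f n)^2) \<longlonglongrightarrow> norm (v - m)^2" by (intro tendsto_intros lim)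
    show "(\<lambda>n. d^2 + inverse (real (Suc n))) \<longlonglongrightarrow> d^2" by (rule LIMSEQ_inverse_real_of_nat_add)
    show "\<exists>N. \<forall>n\<ge>N. norm (v - f n)^2 \<le> d^2 + inverse (real (Suc n))" using f(2) less_imp_le by blast
  qed
  hence best: "norm (v - m)^2 \<le> norm (v - w)^2" if "w \<in> M" for w
    using dle[OF that] d0 by (meson order_trans power_mono)
  define u where "u = v - m"
  have realorth: "inner u w = 0" if w: "w \<in> M" for w
  proof (cases "w = 0")
    case True thus ?thesis by simp
  next
    case False
    define c where "c = inner u w"
    have ww: "0 < inner w w" using False by simp
    have key: "0 \<le> t^2 * inner w w - 2*t*c" for t
    proof -
      have "m + t *\<^sub>R w \<in> M" using mM w sub by (simp add: csub_add csub_scaleR)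
      from best[OF this] have "norm u ^2 \<le> norm (u - t *\<^sub>R w)^2" unfolding u_def by (simp add: algebra_simps)
      thus ?thesis unfolding power2_norm_eq_inner c_def
        by (simp add: inner_diff_left inner_diff_right inner_commute power2_eq_square algebra_simps)
    qed
    have "0 \<le> (c / inner w w)^2 * inner w w - 2*(c/inner w w)*c" by (rule key)
    also have "\<dots> = - (c^2 / inner w w)" using ww by (simp add: power2_eq_square field_simps)
    finally have "c^2 / inner w w \<le> 0" by simp
    hence "c^2 \<le> 0" using ww by (simp add: divide_le_0_iff)
    thus ?thesis unfolding c_def by simp
  qed
  have "u \<in> orth M"
    unfolding orth_def
  proof (intro CollectI ballI)
    fix w assume w: "w \<in> M"
    have r: "Re (cinner w u) = 0" using realorth[OF w] by (simp add: Re_cinner inner_commute)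
    have "\<i> *\<^sub>C w \<in> M" using w sub by (simp add: csub_scaleC)
    hence "Re (cinner (\<i> *\<^sub>C w) u) = 0" by (metis Re_cinner inner_commute realorth)
    hence i: "Im (cinner w u) = 0" by (simp add: cinner_scaleC_left)
    show "cinner w u = 0" using r i by (simp add: complex_eq_iff)
  qed
  thus ?thesis using mM unfolding u_def by blast
qed


lemma scaleC_zero_right[simp]: "c *\<^sub>C (0::'a::complex_vector) = 0"
  using scaleC_add_right[of c "0::'a" 0] by simp

lemma lr_csub0: "linear_relation R \<Longrightarrow> csub (R `` {0})"
  unfolding linear_relation_def csub_def
  by (auto, metis add_0 fst_conv snd_conv, metis scaleC_zero_right fst_conv snd_conv)

lemma lr_closed0:
  fixes R :: "('a::real_normed_vector \<times> 'a) set"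
  shows "closed R \<Longrightarrow> closed (R `` {0})"
proof -
  assume c: "closed R"
  have "R `` {0} = (\<lambda>y. (0::'a, y)) -` R" by auto
  moreover have "closed ((\<lambda>y. (0::'a, y)) -` R)"
  proof -
    have "\<And>x. continuous (at x) (\<lambda>y. (0::'a, y))" by (intro continuous_intros)
    from continuous_closed_vimage[OF c this] show ?thesis .
  qed
  ultimately show ?thesis by simp
qed

lemma lr_add: "linear_relation R \<Longrightarrow> (x,f)\<in>R \<Longrightarrow> (y,g)\<in>R \<Longrightarrow> (x+y, f+g) \<in> R"
  unfolding linear_relation_def by (metis fst_conv snd_conv)

lemma lr_diff: "linear_relation R \<Longrightarrow> (x,f)\<in>R \<Longrightarrow> (y,g)\<in>R \<Longrightarrow> (x-y, f-g) \<in> R"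
proof -
  assume R: "linear_relation R" "(x,f)\<in>R" "(y,g)\<in>R"
  hence "((-1) *\<^sub>C y, (-1) *\<^sub>C g) \<in> R" unfolding linear_relation_def by (metis fst_conv snd_conv)
  hence "(-y, -g) \<in> R" by (simp add: scaleC_minus1)
  from lr_add[OF R(1,2) this] show ?thesis by simp
qed

lemma orth_add: "a \<in> orth M \<Longrightarrow> b \<in> orth M \<Longrightarrow> a + b \<in> orth M"
  unfolding orth_def by (simp add: cinner_add_right)
lemma orth_diff: "a \<in> orth M \<Longrightarrow> b \<in> orth M \<Longrightarrow> a - b \<in> orth M"
  unfolding orth_def by (simp add: cinner_diff_right)
lemma orth_orth: "a \<in> M \<Longrightarrow> a \<in> orth (orth M)"
  unfolding orth_def by (auto, metis cinner_commute complex_cnj_zero)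
lemma orth_anti: "M \<subseteq> N \<Longrightarrow> orth N \<subseteq> orth M"
  unfolding orth_def by auto

lemma proj_char:
  assumes "m \<in> orth M" "v - m \<in> M"
  shows "orth_proj (orth M) v = m"
  unfolding orth_proj_def
proof (rule the_equality)
  show "m \<in> orth M \<and> v - m \<in> orth (orth M)" using assms orth_orth by blast
  fix m' assume h: "m' \<in> orth M \<and> v - m' \<in> orth (orth M)"
  have d1: "m' - m \<in> orth M" using h assms orth_diff by blast
  have "(v - m) - (v - m') \<in> orth (orth M)" using h assms orth_orth orth_diff by blast
  hence d2: "m' - m \<in> orth (orth M)" by simp
  have "cinner (m' - m) (m' - m) = 0" using d1 d2 unfolding orth_def by blast
  thus "m' = m" using cinner_self_zero by fastforce
qed

lemma proj_ex:
  fixes M :: "'a::chilbert_space set"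
  assumes "csub M" "closed M"
  shows "\<exists>m. m \<in> orth M \<and> v - m \<in> M"
proof -
  obtain a where "a \<in> M" "v - a \<in> orth M" using proj_exists[OF assms] by blast
  thus ?thesis by (intro exI[of _ "v - a"]) simp
qed

lemma op_part_eq:
  assumes R: "linear_relation R" and xf: "(x,f) \<in> R" and g: "g \<in> orth (R `` {0})"
    and fg: "f - g \<in> R `` {0}"
  shows "op_part R x = g"
  unfolding op_part_def
proof (rule the_equality)
  have "(x - 0, f - (f - g)) \<in> R" using lr_diff[OF R xf] fg by blast
  hence xg: "(x, g) \<in> R" by simp
  show "(x, g) \<in> T_s R" unfolding T_s_def T_inf_def
  proof (intro CollectI conjI ballI xg)
    fix q assume "q \<in> {p \<in> R. fst p = 0}"
    then obtain h where q: "q = (0, h)" "(0, h) \<in> R" by (cases q) auto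
    have "cinner h g = 0" using g q unfolding orth_def by blast
    hence "cinner g h = 0" by (metis cinner_commute complex_cnj_zero)
    thus "pinner (x, g) q = 0" using q unfolding pinner_def by simp
  qed
  fix g' assume g': "(x, g') \<in> T_s R"
  hence g'R: "(x, g') \<in> R" unfolding T_s_def by blast
  have "(x - x, g - g') \<in> R" using lr_diff[OF R xg g'R] .
  hence z: "(0, g - g') \<in> T_inf R" unfolding T_inf_def by simp
  have "pinner (x, g') (0, g - g') = 0" using g' z unfolding T_s_def by blast
  hence a1: "cinner g' (g - g') = 0" unfolding pinner_def by simp
  have "cinner (g - g') g = 0" using g z unfolding orth_def T_inf_def by auto
  hence a2: "cinner g (g - g') = 0" by (metis cinner_commute complex_cnj_zero)
  have "cinner (g - g') (g - g') = 0" using a1 a2 by (simp add: cinner_diff_left)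
  thus "g' = g" using cinner_self_zero by fastforce
qed

lemma op_part_mem:
  fixes R :: "('a::chilbert_space \<times> 'a) set"
  assumes R: "linear_relation R" "closed R" and x: "x \<in> Domain R"
  shows "(x, op_part R x) \<in> R"
proof -
  obtain f where xf: "(x, f) \<in> R" using x by blast
  obtain m where m: "m \<in> orth (R `` {0})" "f - m \<in> R `` {0}"
    using proj_ex[OF lr_csub0[OF R(1)] lr_closed0[OF R(2)]] by blast
  have "op_part R x = m" by (rule op_part_eq[OF R(1) xf m])
  moreover have "(x - 0, f - (f - m)) \<in> R" using lr_diff[OF R(1) xf] m(2) by blast
  ultimately show ?thesis by simp
qed


lemma dom_orth:
  assumes "hermitian_rel R" "(y, h) \<in> R" "(0, s) \<in> R"
  shows "cinner s y = 0"
proof -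
  have "(y, h) \<in> adjoint_rel R" using assms unfolding hermitian_rel_def by blast
  hence "cinner h 0 = cinner y s" using assms(3) unfolding adjoint_rel_def by blast
  hence "cinner y s = 0" by simp
  thus ?thesis by (metis cinner_commute complex_cnj_zero)
qed

lemma proj_val:
  fixes M :: "'a::chilbert_space set"
  assumes "csub M" "closed M"
  shows "orth_proj (orth M) v \<in> orth M \<and> v - orth_proj (orth M) v \<in> M"
proof -
  obtain m where "m \<in> orth M" "v - m \<in> M" using proj_ex[OF assms] by blast
  thus ?thesis using proj_char by metis
qed

lemma herm_part:
  fixes M :: "'a::chilbert_space set"
  assumes M: "csub M" "closed M" and H: "hermitian_rel R" and xu: "(x,u)\<in>R" and yv: "(y,v)\<in>R"
    and xo: "x \<in> orth M" and yo: "y \<in> orth M"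
  shows "cinner (orth_proj (orth M) u) y = cinner x (orth_proj (orth M) v)"
proof -
  have a: "u - orth_proj (orth M) u \<in> M" using proj_val[OF M] by blast
  have b: "v - orth_proj (orth M) v \<in> M" using proj_val[OF M] by blast
  have "cinner (u - orth_proj (orth M) u) y = 0" using a yo unfolding orth_def by blast
  hence 1: "cinner (orth_proj (orth M) u) y = cinner u y" by (simp add: cinner_diff_left)
  have "cinner (v - orth_proj (orth M) v) x = 0" using b xo unfolding orth_def by blast
  hence "cinner x (v - orth_proj (orth M) v) = 0" by (metis cinner_commute complex_cnj_zero)
  hence 2: "cinner x (orth_proj (orth M) v) = cinner x v" by (simp add: cinner_diff_right)
  have "(x,u) \<in> adjoint_rel R" using H xu unfolding hermitian_rel_def by blast
  hence "cinner u y = cinner x v" using yv unfolding adjoint_rel_def by blast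
  thus ?thesis using 1 2 by simp
qed

theorem theorem3p1:
  fixes T S A :: "('a::chilbert_space \<times> 'a) set"
  assumes "linear_relation T" "closed T"
    and "linear_relation S" "closed S"
    and "linear_relation A" "closed A"
    and "Domain T = Domain S" "Domain S \<subseteq> Domain A"
    and "T = rel_sum S A"
  shows "orth (T `` {0}) \<subseteq> orth (S `` {0}) \<and> orth (T `` {0}) \<subseteq> orth (A `` {0})
    \<and> (\<forall>x\<in>Domain T. op_part T x =
          orth_proj (orth (T `` {0})) (op_part S x) + orth_proj (orth (T `` {0})) (op_part A x))
    \<and> (hermitian_rel S \<and> hermitian_rel A \<longrightarrow>
        (\<forall>x\<in>Domain T. \<forall>y\<in>Domain T.
           cinner (orth_proj (orth (T `` {0})) (op_part S x)) y
             = cinner x (orth_proj (orth (T `` {0})) (op_part S y))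
         \<and> cinner (orth_proj (orth (T `` {0})) (op_part A x)) y
             = cinner x (orth_proj (orth (T `` {0})) (op_part A y))))"
proof -
  define T0 where "T0 = T `` {0}"
  have cs: "csub T0" unfolding T0_def using lr_csub0[OF assms(1)] .
  have cl: "closed T0" unfolding T0_def using lr_closed0[OF assms(2)] .
  have S00: "(0,0) \<in> S" and A00: "(0,0) \<in> A" using assms(3,5) unfolding linear_relation_def by auto
  have T0eq: "T0 = {a + b | a b. a \<in> S `` {0} \<and> b \<in> A `` {0}}"
    unfolding T0_def assms(9) rel_sum_def by auto
  have ST: "S `` {0} \<subseteq> T0" unfolding T0eq using A00 by force
  have AT: "A `` {0} \<subseteq> T0" unfolding T0eq using S00 by force
  have part1: "orth T0 \<subseteq> orth (S `` {0}) \<and> orth T0 \<subseteq> orth (A `` {0})"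
    using ST AT orth_anti by blast
  have part2: "op_part T x = orth_proj (orth T0) (op_part S x) + orth_proj (orth T0) (op_part A x)"
    if x: "x \<in> Domain T" for x
  proof -
    define u where "u = op_part S x"
    define w where "w = op_part A x"
    have xu: "(x, u) \<in> S" unfolding u_def using op_part_mem[OF assms(3,4)] x assms(7) by simp
    have xw: "(x, w) \<in> A" unfolding w_def using op_part_mem[OF assms(5,6)] x assms(7,8) by blast
    have xT: "(x, u + w) \<in> T" unfolding assms(9) rel_sum_def using xu xw by blast
    have p1: "orth_proj (orth T0) u \<in> orth T0 \<and> u - orth_proj (orth T0) u \<in> T0" using proj_val[OF cs cl] .
    have p2: "orth_proj (orth T0) w \<in> orth T0 \<and> w - orth_proj (orth T0) w \<in> T0" using proj_val[OF cs cl] .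
    have "op_part T x = orth_proj (orth T0) u + orth_proj (orth T0) w"
    proof (rule op_part_eq[OF assms(1) xT])
      show "orth_proj (orth T0) u + orth_proj (orth T0) w \<in> orth (T `` {0})"
        using p1 p2 orth_add unfolding T0_def by blast
      have "(u - orth_proj (orth T0) u) + (w - orth_proj (orth T0) w) \<in> T0"
        using p1 p2 csub_add[OF cs] by blast
      thus "u + w - (orth_proj (orth T0) u + orth_proj (orth T0) w) \<in> T `` {0}"
        unfolding T0_def by (simp add: algebra_simps)
    qed
    thus ?thesis unfolding u_def w_def .
  qed
  have part3: "cinner (orth_proj (orth T0) (op_part S x)) y = cinner x (orth_proj (orth T0) (op_part S y))
      \<and> cinner (orth_proj (orth T0) (op_part A x)) y = cinner x (orth_proj (orth T0) (op_part A y))"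
    if H: "hermitian_rel S" "hermitian_rel A" and x: "x \<in> Domain T" and y: "y \<in> Domain T" for x y
  proof -
    have dom: "z \<in> orth T0" if z: "z \<in> Domain T" for z
      unfolding orth_def
    proof (intro CollectI ballI)
      fix a assume "a \<in> T0"
      then obtain s b where a: "a = s + b" "(0, s) \<in> S" "(0, b) \<in> A" unfolding T0eq by blast
      obtain h where "(z, h) \<in> S" using z assms(7) by blast
      hence 1: "cinner s z = 0" using dom_orth[OF H(1)] a by blast
      obtain k where "(z, k) \<in> A" using z assms(7,8) by blast
      hence 2: "cinner b z = 0" using dom_orth[OF H(2)] a by blast
      show "cinner a z = 0" using 1 2 a by (simp add: cinner_add_left)
    qed
    have sx: "(x, op_part S x) \<in> S" "(y, op_part S y) \<in> S"
      using op_part_mem[OF assms(3,4)] x y assms(7) by auto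
    have ax: "(x, op_part A x) \<in> A" "(y, op_part A y) \<in> A"
      using op_part_mem[OF assms(5,6)] x y assms(7,8) by (metis subsetD)+
    show ?thesis
      using herm_part[OF cs cl H(1) sx dom[OF x] dom[OF y]] herm_part[OF cs cl H(2) ax dom[OF x] dom[OF y]]
      by blast
  qed
  show ?thesis using part1 part2 part3 unfolding T0_def by blast
qed

end
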